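(* Let $\alpha\in(1,2)$ and let $p\ge2$ be an integer. Then $f^{p,\alpha}(\theta)\ge0$ for all $\theta\in[-\pi,\pi]$, $f^{p,\alpha}(\theta)=0$ for $\theta\in[-\pi,\pi]$ only at $\theta=0$, and this zero has order $\alpha$, i.e. $f^{p,\alpha}(\theta)/|\theta|^\alpha$ tends to a finite positive limit as $\theta\to0$.
   Context: For real $\alpha$ and integer $p\ge 2$, $f^{p,\alpha}(\theta)=\sum_{l\in\mathbb Z}|\theta+2l\pi|^{\alpha}\left(\frac{\sin(\theta/2+l\pi)}{\theta/2+l\pi}\right)^{p+1}$ (with $\frac{\sin x}{x}:=1$ at $x=0$). *)

theory Defs
  imports "HOL-Analysis.Analysis"
begin

definition sinc :: "real \<Rightarrow> real" where
  "sinc x = (if x = 0 then 1 else sin x / x)"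

definition f_term :: "nat \<Rightarrow> real \<Rightarrow> real \<Rightarrow> int \<Rightarrow> real" where
  "f_term p \<alpha> \<theta> l = \<bar>\<theta> + 2 * of_int l * pi\<bar> powr \<alpha> * sinc (\<theta> / 2 + of_int l * pi) ^ (p + 1)"

definition f_p_alpha :: "nat \<Rightarrow> real \<Rightarrow> real \<Rightarrow> real" where
  "f_p_alpha p \<alpha> \<theta> = (\<Sum>\<^sub>\<infinity>l\<in>(UNIV::int set). f_term p \<alpha> \<theta> l)"

end

theory Submission
  imports Defs
begin

lemma sinc_formula:
  assumes "x \<noteq> 0"
  shows "\<bar>2*x\<bar> powr a * sinc x ^ q = 2 powr a * (sin x * sgn x)^q * \<bar>x\<bar> powr (a - real q)"
proof -
  have "sinc x = sin x * sgn x / \<bar>x\<bar>" using assms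
    by (cases "x > 0") (auto simp: sinc_def sgn_if)
  hence 1: "sinc x ^ q = (sin x * sgn x)^q / \<bar>x\<bar>^q" by (simp add: power_divide)
  have 2: "\<bar>2*x\<bar> powr a = 2 powr a * \<bar>x\<bar> powr a" by (simp add: abs_mult powr_mult)
  have 3: "\<bar>x\<bar> powr a / \<bar>x\<bar>^q = \<bar>x\<bar> powr (a - real q)" using assms
    by (simp add: powr_diff powr_realpow)
  show ?thesis unfolding 1 2 3[symmetric] by simp
qed

lemma abs_sin_shift: "\<bar>sin (x + of_int l * pi)\<bar> = \<bar>sin x\<bar>"
proof -
  have s: "sin (of_int l * pi) = 0" by (metis mult.commute sin_npi_int)
  have c: "\<bar>cos (of_int l * pi)\<bar> = 1" using cos_npi_int[of l] by (simp add: mult.commute)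
  show ?thesis by (simp add: sin_add abs_mult s c)
qed

lemma f_term_alt: "f_term p a t l = \<bar>2*(t/2 + of_int l*pi)\<bar> powr a * sinc (t/2 + of_int l * pi)^(p+1)"
  by (simp add: f_term_def algebra_simps)

lemma f_term_formula:
  assumes "t/2 + of_int l * pi \<noteq> 0"
  shows "f_term p a t l = 2 powr a * (sin (t/2 + of_int l * pi) * sgn (t/2 + of_int l * pi))^(p+1)
      * \<bar>t/2 + of_int l*pi\<bar> powr (a - real (p+1))"
  unfolding f_term_alt by (rule sinc_formula[OF assms])

lemma f_term_abs:
  assumes "t/2 + of_int l * pi \<noteq> 0"
  shows "\<bar>f_term p a t l\<bar> = 2 powr a * \<bar>sin (t/2)\<bar>^(p+1) * \<bar>t/2 + of_int l*pi\<bar> powr (a - real (p+1))"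
  unfolding f_term_formula[OF assms] using assms
  by (simp add: abs_mult power_abs abs_sin_shift abs_sgn_eq)

lemma f_term_bound:
  assumes "t \<in> {-pi..pi}" "l \<noteq> 0" "a \<le> real (p+1)"
  shows "\<bar>f_term p a t l\<bar> \<le> 2 powr a * \<bar>sin (t/2)\<bar>^(p+1) *
     ((pi/2) powr (a - real (p+1)) * \<bar>real_of_int l\<bar> powr (a - real (p+1)))"
proof -
  have l1: "\<bar>real_of_int l\<bar> \<ge> 1" using assms(2) by linarith
  have "\<bar>real_of_int l\<bar> * pi \<ge> pi" using l1 by (simp add: pi_gt_zero)
  have ge: "\<bar>t/2 + of_int l*pi\<bar> \<ge> \<bar>real_of_int l\<bar> * pi / 2"
  proof -
    have "\<bar>of_int l * pi\<bar> = \<bar>real_of_int l\<bar> * pi" by (simp add: abs_mult)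
    moreover have "\<bar>t/2\<bar> \<le> pi/2" using assms(1) by auto
    ultimately show ?thesis using \<open>\<bar>real_of_int l\<bar> * pi \<ge> pi\<close> by linarith
  qed
  have pos: "\<bar>real_of_int l\<bar> * pi / 2 > 0" using l1 pi_gt_zero by simp
  hence nz: "t/2 + of_int l * pi \<noteq> 0" using ge by auto
  have "\<bar>t/2 + of_int l*pi\<bar> powr (a - real (p+1)) \<le> (\<bar>real_of_int l\<bar> * pi / 2) powr (a - real (p+1))"
    by (rule powr_mono2') (use assms(3) pos ge in auto)
  also have "\<dots> = (pi/2) powr (a - real (p+1)) * \<bar>real_of_int l\<bar> powr (a - real (p+1))"
    by (simp add: powr_mult[symmetric] mult_ac)
  finally have "\<bar>t/2 + of_int l*pi\<bar> powr (a - real (p+1)) \<le> \<dots>" .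
  thus ?thesis unfolding f_term_abs[OF nz]
    by (intro mult_left_mono) auto
qed

lemma w_summable:
  assumes "b < -1"
  shows "(\<lambda>l::int. \<bar>real_of_int l\<bar> powr b) summable_on UNIV"
proof -
  have "summable (\<lambda>n. norm (real n powr b))" using summable_real_powr_iff[of b] assms by simp
  hence N: "(\<lambda>n::nat. real n powr b) summable_on UNIV" by (rule norm_summable_imp_summable_on)
  have A: "(\<lambda>l::int. \<bar>real_of_int l\<bar> powr b) summable_on (range int)"
    by (subst summable_on_reindex) (auto simp: inj_on_def o_def N)
  have B: "(\<lambda>l::int. \<bar>real_of_int l\<bar> powr b) summable_on (range (\<lambda>n. - int n))"
    by (subst summable_on_reindex) (auto simp: inj_on_def o_def N)
  have U: "range int \<union> range (\<lambda>n. - int n) = UNIV"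
  proof (intro set_eqI iffI)
    fix x :: int
    show "x \<in> range int \<union> range (\<lambda>n. - int n)"
    proof (cases "x \<ge> 0")
      case True then have "x = int (nat x)" by simp
      then show ?thesis by blast
    next
      case False then have "x = - int (nat (-x))" by simp
      then show ?thesis by blast
    qed
  qed simp
  show ?thesis using summable_on_union[OF A B] U by simp
qed

lemma f_summable0:
  assumes "t \<in> {-pi..pi}" "a < real p"
  shows "f_term p a t summable_on (UNIV - {0})"
proof -
  let ?b = "a - real (p+1)"
  let ?K = "2 powr a * \<bar>sin(t/2)\<bar>^(p+1) * (pi/2) powr ?b"
  let ?g = "\<lambda>l::int. ?K * \<bar>real_of_int l\<bar> powr ?b"
  have g: "?g summable_on UNIV" using assms by (intro summable_on_cmult_right w_summable) auto
  hence g0: "?g summable_on (UNIV - {0})" by (rule summable_on_subset) auto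
  have "(\<lambda>x. norm (f_term p a t x)) summable_on (UNIV - {0})"
  proof (rule summable_on_comparison_test[OF g0])
    fix l :: int assume "l \<in> UNIV - {0}"
    thus "norm (f_term p a t l) \<le> ?g l" using f_term_bound[OF assms(1), of l a p] assms
      by (simp add: mult_ac)
  qed simp
  thus ?thesis using summable_on_iff_abs_summable_on_real by blast
qed

lemma f_summable:
  assumes "t \<in> {-pi..pi}" "a < real p"
  shows "f_term p a t summable_on UNIV"
proof -
  have "UNIV = insert 0 (UNIV - {0::int})" by auto
  thus ?thesis using f_summable0[OF assms] summable_on_insert_iff by metis
qed

lemma sin_shift_even: "sin (x + of_int (2*k) * pi) = sin x"
proof -
  have "of_int (2*k) * pi = (2*pi) * of_int k" by simp
  thus ?thesis by (simp only: sin_add) simp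
qed

lemma pair_bound:
  assumes "0 < t" "t \<le> pi" "a < real (p+1)"
  shows "f_term p a t (2*k) + f_term p a t (2*k+1) \<ge> 0"
    and "k = 0 \<Longrightarrow> f_term p a t (2*k) + f_term p a t (2*k+1) > 0"
proof -
  define x where "x = (\<lambda>l::int. t/2 + of_int l * pi)"
  define b where "b = a - real (p+1)"
  have b: "b < 0" using assms by (simp add: b_def)
  define s where "s = sin (t/2)"
  have s: "s > 0" unfolding s_def using assms pi_gt_zero by (intro sin_gt_zero) auto
  have nz: "x l \<noteq> 0" for l
  proof (cases "l \<ge> 0")
    case True then have "of_int l * pi \<ge> 0" by simp
    then show ?thesis using assms unfolding x_def by auto
  next
    case False then have "real_of_int l \<le> -1" by simp
    then have "of_int l * pi \<le> -1 * pi" using pi_gt_zero by (intro mult_right_mono) auto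
    then show ?thesis using assms unfolding x_def by auto
  qed
  define T where "T = (\<lambda>l. 2 powr a * s^(p+1) * \<bar>x l\<bar> powr b)"
  have lowT: "f_term p a t l \<ge> - T l" for l
  proof -
    have "\<bar>f_term p a t l\<bar> = T l" using f_term_abs[of t l p a] nz[of l] s
      by (simp add: T_def x_def b_def s_def)
    thus ?thesis by linarith
  qed
  have good: "f_term p a t l = T l" if "sin (x l) * sgn (x l) = s" for l
    using f_term_formula[of t l p a] nz[of l] that by (simp add: T_def x_def b_def)
  have Tmono: "T l \<le> T m" if "\<bar>x m\<bar> \<le> \<bar>x l\<bar>" for l m
    unfolding T_def using that nz[of m] b s
    by (intro mult_left_mono powr_mono2') auto
  have Tstrict: "T l < T m" if "\<bar>x m\<bar> < \<bar>x l\<bar>" for l m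
    unfolding T_def using that nz[of m] b s
    by (intro mult_strict_left_mono powr_less_mono2_neg) auto
  have x1: "x (2*k+1) = x (2*k) + pi" by (simp add: x_def algebra_simps)
  have sx: "sin (x (2*k)) = s" unfolding x_def s_def by (rule sin_shift_even)
  have "T (2*k+1) \<le> f_term p a t (2*k) \<and> (k = 0 \<longrightarrow> T (2*k+1) < f_term p a t (2*k))
       \<or> T (2*k) \<le> f_term p a t (2*k+1) \<and> k \<noteq> 0"
  proof (cases "k \<ge> 0")
    case True
    have "of_int (2*k) * pi \<ge> 0" using True by simp
    hence pos: "x (2*k) > 0" using assms unfolding x_def by linarith
    have g: "f_term p a t (2*k) = T (2*k)" using pos sx by (intro good) simp
    have "\<bar>x (2*k)\<bar> < \<bar>x (2*k+1)\<bar>" using pos x1 pi_gt_zero by simp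
    hence "T (2*k+1) < T (2*k)" by (rule Tstrict)
    thus ?thesis using g by (auto simp del: mult_zero_right)
  next
    case False
    have "real_of_int k \<le> -1" using False by simp
    then have "of_int (2*k+1) * pi \<le> -1 * pi" using pi_gt_zero by (intro mult_right_mono) auto
    hence neg: "x (2*k+1) < 0" using assms unfolding x_def by auto
    have "sin (x (2*k+1)) = - s" using x1 sx by simp
    hence g: "f_term p a t (2*k+1) = T (2*k+1)" using neg by (intro good) simp
    have "\<bar>x (2*k+1)\<bar> < \<bar>x (2*k)\<bar>" using neg x1 pi_gt_zero by (smt (verit))
    thus ?thesis using g Tmono False by (simp add: less_imp_le)
  qed
  thus "f_term p a t (2*k) + f_term p a t (2*k+1) \<ge> 0"
       "k = 0 \<Longrightarrow> f_term p a t (2*k) + f_term p a t (2*k+1) > 0"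
    using lowT[of "2*k"] lowT[of "2*k+1"] by auto
qed

lemma f_pos_right:
  assumes "0 < t" "t \<le> pi" "a < real p"
  shows "f_p_alpha p a t > 0"
proof -
  let ?f = "f_term p a t"
  have S: "?f summable_on UNIV" using f_summable[of t a p] assms by auto
  define E where "E = range (\<lambda>k::int. 2*k)"
  define Od where "Od = range (\<lambda>k::int. 2*k+1)"
  have EO: "E \<union> Od = UNIV"
  proof (intro set_eqI iffI)
    fix x :: int
    show "x \<in> E \<union> Od"
    proof (cases "even x")
      case True then obtain k where "x = 2*k" by (elim evenE)
      then show ?thesis by (auto simp: E_def)
    next
      case False then obtain k where "x = 2*k+1" by (elim oddE)
      then show ?thesis by (auto simp: Od_def)
    qed
  qed simp
  have disj: "E \<inter> Od = {}" unfolding E_def Od_def by (auto, presburger)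
  have hE: "(?f has_sum infsum ?f E) E" using summable_on_subset[OF S] by auto
  have hO: "(?f has_sum infsum ?f Od) Od" using summable_on_subset[OF S] by auto
  have "(?f has_sum (infsum ?f E + infsum ?f Od)) UNIV"
    using has_sum_Un_disjoint[OF hE hO disj] EO by simp
  hence eq: "f_p_alpha p a t = infsum ?f E + infsum ?f Od" unfolding f_p_alpha_def by (rule infsumI)
  have hE': "((\<lambda>k. ?f (2*k)) has_sum infsum ?f E) UNIV"
    using hE has_sum_reindex[of "\<lambda>k::int. 2*k" UNIV ?f] by (simp add: E_def o_def inj_on_def)
  have hO': "((\<lambda>k. ?f (2*k+1)) has_sum infsum ?f Od) UNIV"
    using hO has_sum_reindex[of "\<lambda>k::int. 2*k+1" UNIV ?f] by (simp add: Od_def o_def inj_on_def)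
  have P: "((\<lambda>k. ?f (2*k) + ?f (2*k+1)) has_sum f_p_alpha p a t) UNIV"
    unfolding eq by (rule has_sum_add[OF hE' hO'])
  have P0: "((\<lambda>k. ?f (2*k) + ?f (2*k+1)) has_sum (?f 0 + ?f 1)) {0}"
    using has_sum_finite[of "{0::int}" "\<lambda>k. ?f (2*k) + ?f (2*k+1)"] by simp
  have "?f 0 + ?f 1 \<le> f_p_alpha p a t"
    by (rule has_sum_mono2[OF P0 P]) (use pair_bound(1)[of t a p] assms in auto)
  moreover have "?f 0 + ?f 1 > 0" using pair_bound(2)[of t a p 0] assms by simp
  ultimately show ?thesis by linarith
qed

lemma f_even: "f_p_alpha p a (-t) = f_p_alpha p a t"
proof -
  have fe: "f_term p a (-t) l = f_term p a t (-l)" for l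
  proof -
    have "- t + 2 * of_int l * pi = - (t + 2 * of_int (-l) * pi)" by simp
    hence A: "\<bar>- t + 2 * of_int l * pi\<bar> = \<bar>t + 2 * of_int (-l) * pi\<bar>" by (simp only: abs_minus_cancel)
    have se: "sinc (- y) = sinc y" for y by (simp add: sinc_def)
    have "- t / 2 + of_int l * pi = - (t / 2 + of_int (-l) * pi)" by simp
    hence B: "sinc (- t / 2 + of_int l * pi) = sinc (t / 2 + of_int (-l) * pi)" using se by metis
    show ?thesis unfolding f_term_def by (simp only: A B)
  qed
  have "f_p_alpha p a t = infsum (f_term p a t) (uminus ` UNIV)"
    unfolding f_p_alpha_def by (simp add: surj_def)
  also have "\<dots> = infsum (f_term p a t \<circ> uminus) UNIV" by (rule infsum_reindex) simp
  also have "f_term p a t \<circ> uminus = f_term p a (-t)" by (rule ext) (simp add: fe)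
  also have "infsum \<dots> UNIV = f_p_alpha p a (-t)" unfolding f_p_alpha_def ..
  finally show ?thesis by simp
qed

lemma f_zero: "f_p_alpha p a 0 = 0"
proof -
  have "f_term p a 0 l = 0" for l
  proof (cases "l = 0")
    case True then show ?thesis by (simp add: f_term_def)
  next
    case False
    have "sin (of_int l * pi) = 0" by (metis mult.commute sin_npi_int)
    then show ?thesis by (simp add: f_term_def sinc_def)
  qed
  hence "\<And>l. l \<in> UNIV \<Longrightarrow> f_term p a 0 l = 0" by blast
  thus ?thesis unfolding f_p_alpha_def by (rule infsum_0)
qed

lemma sinc_cont: "isCont sinc 0"
proof -
  have "sinc = (\<lambda>z. if z = 0 then 1 else sin z / z)" by (rule ext) (simp add: sinc_def)
  thus ?thesis using has_field_derivative_sin_z_over_z[of UNIV] DERIV_isCont by metis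
qed

lemma R_bound:
  assumes "t \<in> {-pi..pi}" "a < real p"
  shows "\<bar>infsum (f_term p a t) (UNIV - {0})\<bar> \<le>
     2 powr a * (pi/2) powr (a - real (p+1)) * infsum (\<lambda>l::int. \<bar>real_of_int l\<bar> powr (a - real (p+1))) (UNIV - {0})
     * \<bar>sin (t/2)\<bar>^(p+1)"
proof -
  let ?b = "a - real (p+1)"
  let ?C = "2 powr a * \<bar>sin(t/2)\<bar>^(p+1) * (pi/2) powr ?b"
  have w: "(\<lambda>l::int. \<bar>real_of_int l\<bar> powr ?b) summable_on (UNIV - {0})"
    using assms by (intro summable_on_subset[OF w_summable]) auto
  have A: "(\<lambda>x. norm (f_term p a t x)) summable_on (UNIV - {0})"
    using f_summable0[OF assms] summable_on_iff_abs_summable_on_real by blast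
  have "\<bar>infsum (f_term p a t) (UNIV - {0})\<bar> \<le> infsum (\<lambda>x. norm (f_term p a t x)) (UNIV - {0})"
    using norm_infsum_bound[OF A] by simp
  also have "\<dots> \<le> infsum (\<lambda>l. ?C * \<bar>real_of_int l\<bar> powr ?b) (UNIV - {0})"
  proof (rule infsum_mono[OF A])
    show "(\<lambda>l. ?C * \<bar>real_of_int l\<bar> powr ?b) summable_on (UNIV - {0})"
      by (rule summable_on_cmult_right[OF w])
    fix l :: int assume "l \<in> UNIV - {0}"
    thus "norm (f_term p a t l) \<le> ?C * \<bar>real_of_int l\<bar> powr ?b"
      using f_term_bound[OF assms(1), of l a p] assms by (simp add: mult_ac)
  qed
  also have "\<dots> = ?C * infsum (\<lambda>l::int. \<bar>real_of_int l\<bar> powr ?b) (UNIV - {0})"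
    by (rule infsum_cmult_right')
  finally show ?thesis by (simp add: mult_ac)
qed

lemma f_limit:
  assumes "a < real p"
  shows "((\<lambda>t. f_p_alpha p a t / \<bar>t\<bar> powr a) \<longlongrightarrow> 1) (at 0)"
proof -
  let ?b = "a - real (p+1)"
  define K where "K = 2 powr a * (pi/2) powr ?b * infsum (\<lambda>l::int. \<bar>real_of_int l\<bar> powr ?b) (UNIV - {0})"
  have K: "K \<ge> 0" unfolding K_def by (intro mult_nonneg_nonneg infsum_nonneg) auto
  define R where "R = (\<lambda>t. infsum (f_term p a t) (UNIV - {0}))"
  have ev: "\<forall>\<^sub>F t in at 0. t \<in> {-pi..pi} \<and> t \<noteq> 0"
    unfolding eventually_at by (rule exI[of _ pi]) (auto simp: dist_real_def)
  have decomp: "f_p_alpha p a t / \<bar>t\<bar> powr a = sinc (t/2) ^ (p+1) + R t / \<bar>t\<bar> powr a"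
    if "t \<in> {-pi..pi}" "t \<noteq> 0" for t
  proof -
    have "UNIV = insert 0 (UNIV - {0::int})" by auto
    hence "f_p_alpha p a t = f_term p a t 0 + R t" unfolding f_p_alpha_def R_def
      using infsum_insert[OF f_summable0[OF that(1) assms], of 0] by simp
    moreover have "f_term p a t 0 = \<bar>t\<bar> powr a * sinc (t/2) ^ (p+1)" by (simp add: f_term_def)
    ultimately show ?thesis using that by (simp add: field_simps)
  qed
  have L1: "((\<lambda>t. sinc (t/2) ^ (p+1)) \<longlongrightarrow> 1) (at 0)"
  proof -
    have "((\<lambda>t::real. t/2) \<longlongrightarrow> 0/2) (at 0)" by (intro tendsto_intros) simp
    hence "((\<lambda>t::real. t/2) \<longlongrightarrow> 0) (at 0)" by simp
    from isCont_tendsto_compose[OF sinc_cont this]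
    have "((\<lambda>t. sinc (t/2)) \<longlongrightarrow> 1) (at 0)" by (simp add: sinc_def)
    from tendsto_power[OF this, of "p+1"] show ?thesis by simp
  qed
  have L2: "((\<lambda>t. R t / \<bar>t\<bar> powr a) \<longlongrightarrow> 0) (at 0)"
  proof (rule Lim_null_comparison)
    show "\<forall>\<^sub>F t in at 0. norm (R t / \<bar>t\<bar> powr a) \<le> K * \<bar>t\<bar> powr (real (p+1) - a)"
      using ev
    proof eventually_elim
      case (elim t)
      hence tne: "t \<noteq> 0" and tin: "t \<in> {-pi..pi}" by auto
      have "\<bar>sin (t/2)\<bar> \<le> \<bar>t\<bar>" using abs_sin_x_le_abs_x[of "t/2"] by simp
      hence "\<bar>sin (t/2)\<bar>^(p+1) \<le> \<bar>t\<bar>^(p+1)" by (intro power_mono) auto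
      hence "\<bar>R t\<bar> \<le> K * \<bar>t\<bar>^(p+1)"
        using R_bound[OF tin assms] K unfolding R_def K_def
        by (smt (verit) mult_left_mono)
      hence 1: "\<bar>R t\<bar> / \<bar>t\<bar> powr a \<le> K * (\<bar>t\<bar>^(p+1) / \<bar>t\<bar> powr a)"
        by (simp add: divide_right_mono)
      have e: "\<bar>t\<bar>^(p+1) / \<bar>t\<bar> powr a = \<bar>t\<bar> powr (real (p+1) - a)"
      proof -
        have "\<bar>t\<bar>^(p+1) = \<bar>t\<bar> powr real (p+1)" using tne by (intro powr_realpow[symmetric]) simp
        thus ?thesis by (simp only: powr_diff)
      qed
      show ?case using 1 unfolding e by (simp add: abs_divide)
    qed
    have "((\<lambda>t::real. \<bar>t\<bar> powr (real (p+1) - a)) \<longlongrightarrow> 0) (at 0)"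
    proof (rule tendsto_zero_powrI)
      show "((\<lambda>t::real. \<bar>t\<bar>) \<longlongrightarrow> 0) (at 0)"
        using tendsto_rabs[OF tendsto_ident_at, of 0 UNIV] by simp
    qed (use assms in auto)
    from tendsto_mult[OF tendsto_const this, of K]
    show "((\<lambda>t. K * \<bar>t\<bar> powr (real (p+1) - a)) \<longlongrightarrow> 0) (at 0)" by simp
  qed
  have T: "((\<lambda>t. sinc (t/2) ^ (p+1) + R t / \<bar>t\<bar> powr a) \<longlongrightarrow> 1) (at 0)"
    using tendsto_add[OF L1 L2] by simp
  have E: "\<forall>\<^sub>F t in at 0. sinc (t/2) ^ (p+1) + R t / \<bar>t\<bar> powr a = f_p_alpha p a t / \<bar>t\<bar> powr a"
    using ev by eventually_elim (simp add: decomp)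
  show ?thesis by (rule Lim_transform_eventually[OF T E])
qed

theorem corollary5p3:
  fixes \<alpha> :: real and p :: nat
  assumes "1 < \<alpha>" and "\<alpha> < 2" and "2 \<le> p"
  shows "(\<forall>\<theta>\<in>{-pi..pi}. f_term p \<alpha> \<theta> summable_on (UNIV::int set))
    \<and> (\<forall>\<theta>\<in>{-pi..pi}. f_p_alpha p \<alpha> \<theta> \<ge> 0)
    \<and> {\<theta>\<in>{-pi..pi}. f_p_alpha p \<alpha> \<theta> = 0} = {0}
    \<and> (\<exists>L>0. ((\<lambda>\<theta>. f_p_alpha p \<alpha> \<theta> / \<bar>\<theta>\<bar> powr \<alpha>) \<longlongrightarrow> L) (at 0))"
proof -
  have ap: "\<alpha> < real p" using assms by linarith
  have pos: "f_p_alpha p \<alpha> t > 0" if "t \<in> {-pi..pi}" "t \<noteq> 0" for t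
  proof (cases "t > 0")
    case True then show ?thesis using f_pos_right[OF True _ ap] that by auto
  next
    case False
    hence "0 < -t" "-t \<le> pi" using that by auto
    from f_pos_right[OF this ap] show ?thesis by (simp add: f_even)
  qed
  have A: "\<forall>\<theta>\<in>{-pi..pi}. f_term p \<alpha> \<theta> summable_on (UNIV::int set)"
    using f_summable ap by blast
  have B: "\<forall>\<theta>\<in>{-pi..pi}. f_p_alpha p \<alpha> \<theta> \<ge> 0"
    using pos f_zero by (metis less_imp_le order_refl)
  have C: "{\<theta>\<in>{-pi..pi}. f_p_alpha p \<alpha> \<theta> = 0} = {0}"
    using pos f_zero pi_gt_zero by force
  have D: "\<exists>L>0. ((\<lambda>\<theta>. f_p_alpha p \<alpha> \<theta> / \<bar>\<theta>\<bar> powr \<alpha>) \<longlongrightarrow> L) (at 0)"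
    using f_limit[OF ap] by (intro exI[of _ 1]) simp
  show ?thesis using A B C D by blast
qed

end
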